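(* Let $L_1,L_2\subseteq\Sigma^*$ be regular languages with $L_1\subseteq\bigcup_{\alpha\in\Sigma^\kappa}\Sigma^*\alpha\Sigma^*\bar\alpha$ and $L_2\subseteq\bigcup_{\alpha\in\Sigma^\kappa}\alpha\Sigma^*\bar\alpha\Sigma^*$. Let $\lambda=\max\{\lambda_{L_1},\lambda_{L_2}\}$ and let $\eta=\lambda_{\mathcal{H}_\kappa(L_1,L_2)}$. Then: (i) $\sqrt{\lambda}\le\eta\le\lambda$. In particular, the growth of $\mathcal{H}_\kappa(L_1,L_2)$ is exponential (resp. polynomial, finite) if and only if the maximum growth of $L_1$ and $L_2$ is exponential (resp. polynomial, finite). (ii) If $\mathcal{H}_\kappa(L_1,L_2)$ is regular, then $\eta=\lambda$.
   Context: $\Sigma$ is a finite alphabet with at least two letters equipped with an involution $a\mapsto\bar a$ (a bijection with $\bar{\bar a}=a$), extended to words by $\overline{a_1\cdots a_m}=\bar a_m\cdots\bar a_1$. $\kappa$ is a fixed positive integer. The hairpin completion is $\mathcal{H}_\kappa(L_1,L_2)=\{\gamma\alpha\beta\bar\alpha\bar\gamma:\gamma,\alpha,\beta\in\Sigma^*,\ |\alpha|\ge\kappa,\ \gamma\alpha\beta\bar\alpha\in L_1\text{ or }\alpha\beta\bar\alpha\bar\gamma\in L_2\}$. For a language $L$, its growth indicator is $\lambda_L=\inf\{\lambda\in\mathbb{R}_{\ge0}:\exists c>0\ \forall m\in\mathbb{N}: |L\cap\Sigma^m|\le c\lambda^m\}$. The growth of $L$ is called exponential if $\lambda_L>1$,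 polynomial (sub-exponential but infinite) if $\lambda_L=1$, and finite if $\lambda_L=0$ (for regular and unambiguous linear languages these are the only possibilities). *)

theory Defs
  imports Complex_Main "HOL-Library.Cardinality"
begin

datatype 'a rexp = Zero | One | Atom 'a | Plus "'a rexp" "'a rexp" | Times "'a rexp" "'a rexp" | Star "'a rexp"

definition conc :: "'a list set \<Rightarrow> 'a list set \<Rightarrow> 'a list set" where
  "conc A B = {u @ v | u v. u \<in> A \<and> v \<in> B}"

inductive_set kstar :: "'a list set \<Rightarrow> 'a list set" for A where
  kstar_Nil: "[] \<in> kstar A"
| kstar_app: "u \<in> A \<Longrightarrow> v \<in> kstar A \<Longrightarrow> u @ v \<in> kstar A"

fun lang :: "'a rexp \<Rightarrow> 'a list set" where
  "lang Zero = {}"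
| "lang One = {[]}"
| "lang (Atom a) = {[a]}"
| "lang (Plus r s) = lang r \<union> lang s"
| "lang (Times r s) = conc (lang r) (lang s)"
| "lang (Star r) = kstar (lang r)"

definition regular :: "'a list set \<Rightarrow> bool" where
  "regular L \<longleftrightarrow> (\<exists>r. lang r = L)"

definition wbar :: "('a \<Rightarrow> 'a) \<Rightarrow> 'a list \<Rightarrow> 'a list" where
  "wbar bar w = rev (map bar w)"

definition hairpin :: "('a \<Rightarrow> 'a) \<Rightarrow> nat \<Rightarrow> 'a list set \<Rightarrow> 'a list set \<Rightarrow> 'a list set" where
  "hairpin bar \<kappa> L1 L2 =
     {\<gamma> @ \<alpha> @ \<beta> @ wbar bar \<alpha> @ wbar bar \<gamma> | \<gamma> \<alpha> \<beta>.
        length \<alpha> \<ge> \<kappa> \<and>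
        (\<gamma> @ \<alpha> @ \<beta> @ wbar bar \<alpha> \<in> L1 \<or> \<alpha> @ \<beta> @ wbar bar \<alpha> @ wbar bar \<gamma> \<in> L2)}"

definition growth :: "'a list set \<Rightarrow> real" where
  "growth L = Inf {l::real. l \<ge> 0 \<and>
      (\<exists>c>0. \<forall>m::nat. real (card {w \<in> L. length w = m}) \<le> c * l ^ m)}"

definition exp_growth :: "'a list set \<Rightarrow> bool" where
  "exp_growth L \<longleftrightarrow> growth L > 1"

definition poly_growth :: "'a list set \<Rightarrow> bool" where
  "poly_growth L \<longleftrightarrow> growth L = 1"

definition finite_growth :: "'a list set \<Rightarrow> bool" where
  "finite_growth L \<longleftrightarrow> growth L = 0"

end

theory Submission
  imports Defs
begin


definition GG :: "'a list set \<Rightarrow> real set" where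
  "GG L = {l::real. l \<ge> 0 \<and>
      (\<exists>c>0. \<forall>m::nat. real (card {w \<in> L. length w = m}) \<le> c * l ^ m)}"

lemma growth_GG: "growth L = Inf (GG L)" by (simp add: growth_def GG_def)

lemma fin_len_le: "finite {w::'a::finite list. length w \<le> M}"
  using finite_lists_length_le[of "UNIV::'a set" M] by simp

lemma fin_len_eq: "finite {w::'a::finite list. length w = M}"
  using finite_lists_length_eq[of "UNIV::'a set" M] by simp

lemma fin_cnt: "finite {w\<in>(L::'a::finite list set). length w = M}"
  by (rule finite_subset[OF _ fin_len_eq[of M]]) auto

lemma GG_card: "real CARD('a) \<in> GG (L::'a::finite list set)"
proof -
  have "real (card {w \<in> L. length w = m}) \<le> 1 * real CARD('a) ^ m" for m
  proof -
    have "card {w \<in> L. length w = m} \<le> card {w::'a list. length w = m}"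
      by (rule card_mono[OF fin_len_eq]) auto
    also have "\<dots> = CARD('a) ^ m"
      using card_lists_length_eq[of "UNIV::'a set" m] by simp
    finally show ?thesis by (simp add: of_nat_le_iff[symmetric])
  qed
  then show ?thesis unfolding GG_def by (auto intro!: exI[of _ 1])
qed

lemma GG_bdd: "bdd_below (GG L)"
  unfolding GG_def bdd_below_def by auto

lemma growth_nonneg: "0 \<le> growth (L::'a::finite list set)"
proof -
  have "GG L \<noteq> {}" using GG_card[of L] by blast
  moreover have "\<forall>x\<in>GG L. 0 \<le> x" by (auto simp: GG_def)
  ultimately show ?thesis unfolding growth_GG by (meson cInf_greatest)
qed

lemma growth_le: "l \<in> GG L \<Longrightarrow> growth L \<le> l"
  unfolding growth_GG by (rule cInf_lower[OF _ GG_bdd])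

lemma GG_up: assumes "l \<in> GG L" "l \<le> l'" shows "l' \<in> GG L"
proof -
  from assms obtain c where c: "c > 0" "\<forall>m. real (card {w \<in> L. length w = m}) \<le> c * l ^ m" "l \<ge> 0"
    unfolding GG_def by auto
  have "c * l ^ m \<le> c * l' ^ m" for m
    using c assms(2) by (intro mult_left_mono power_mono) auto
  hence "\<forall>m. real (card {w \<in> L. length w = m}) \<le> c * l' ^ m" using c(2) order.trans by blast
  moreover have "l' \<ge> 0" using c(3) assms(2) by linarith
  ultimately show ?thesis using c(1) unfolding GG_def by blast
qed

lemma growth_lt: assumes "growth (L::'a::finite list set) < l" shows "l \<in> GG L"
proof -
  have ne: "GG L \<noteq> {}" using GG_card by auto
  from assms have "Inf (GG L) < l" by (simp add: growth_GG)
  then obtain x where "x \<in> GG L" "x < l" using cInf_less_iff[OF ne GG_bdd] by auto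
  then show ?thesis using GG_up by fastforce
qed

lemma growth_le_of: assumes "\<And>y. x < y \<Longrightarrow> y \<in> GG L" shows "growth L \<le> x"
  by (rule dense_ge) (use assms growth_le in blast)

lemma GG_pos_finite:
  assumes fin: "finite (L::'a::finite list set)" and y: "y > 0" shows "y \<in> GG L"
proof -
  obtain M where M: "\<forall>w\<in>L. length w \<le> M"
    using finite_nat_set_iff_bounded_le[of "length ` L"] fin by auto
  define mu where "mu = min 1 y"
  have mu: "0 < mu" "mu \<le> 1" "mu \<le> y" using y by (auto simp: mu_def)
  define c where "c = real (card L) / mu ^ M + 1"
  have "real (card L) / mu ^ M \<ge> 0" using mu by simp
  hence cpos: "c > 0" unfolding c_def by linarith
  have "real (card {w \<in> L. length w = m}) \<le> c * y ^ m" for m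
  proof (cases "m \<le> M")
    case True
    have "card {w \<in> L. length w = m} \<le> card L" by (rule card_mono[OF fin]) auto
    hence "real (card {w \<in> L. length w = m}) \<le> real (card L)" by simp
    also have "\<dots> \<le> real (card L) / mu ^ M * mu ^ M" using mu by simp
    also have "\<dots> \<le> c * y ^ m"
    proof (rule mult_mono)
      show "real (card L) / mu ^ M \<le> c" by (simp add: c_def)
      have "mu ^ M \<le> mu ^ m" using mu True by (simp add: power_decreasing)
      also have "\<dots> \<le> y ^ m" using mu by (simp add: power_mono)
      finally show "mu ^ M \<le> y ^ m" .
    qed (use cpos mu in auto)
    finally show ?thesis .
  next
    case False
    hence "{w \<in> L. length w = m} = {}" using M by auto
    hence "real (card {w \<in> L. length w = m}) = 0" by (simp only: card.empty of_nat_0)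
    moreover have "c * y ^ m \<ge> 0" using cpos y by simp
    ultimately show ?thesis by linarith
  qed
  thus ?thesis using cpos y unfolding GG_def by auto
qed

lemma finite_growth0: "finite (L::'a::finite list set) \<Longrightarrow> growth L = 0"
  using growth_le_of[of 0 L] GG_pos_finite growth_nonneg[of L] by fastforce

lemma GG_small_finite:
  assumes "l \<in> GG (L::'a::finite list set)" "l < 1" shows "finite L"
proof -
  from assms obtain c where c: "c > 0" "\<forall>m. real (card {w \<in> L. length w = m}) \<le> c * l ^ m" "l \<ge> 0"
    unfolding GG_def by auto
  have "(\<lambda>m. c * l ^ m) \<longlonglongrightarrow> c * 0"
    by (intro tendsto_mult tendsto_const LIMSEQ_power_zero) (use c assms in auto)
  hence "eventually (\<lambda>m. c * l ^ m < 1) sequentially"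
    by (intro order_tendstoD) auto
  then obtain M where M: "\<forall>m\<ge>M. c * l ^ m < 1" by (auto simp: eventually_sequentially)
  have "L \<subseteq> {w. length w \<le> M}"
  proof
    fix w assume w: "w \<in> L"
    show "w \<in> {w. length w \<le> M}"
    proof (rule ccontr)
      assume "w \<notin> {w. length w \<le> M}"
      hence "length w \<ge> M" by auto
      hence "real (card {v \<in> L. length v = length w}) < 1" using M c by (meson order.strict_trans1)
      hence "card {v \<in> L. length v = length w} = 0" by simp
      hence "{v \<in> L. length v = length w} = {}" using fin_cnt[of L "length w"] by simp
      thus False using w by auto
    qed
  qed
  thus ?thesis using fin_len_le finite_subset by blast
qed

lemma growth_lt1_finite: "growth (L::'a::finite list set) < 1 \<Longrightarrow> finite L"
proof -
  assume a: "growth L < 1"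
  define l where "l = (growth L + 1) / 2"
  have "growth L < l" "l < 1" using a by (auto simp: l_def)
  thus "finite L" using growth_lt GG_small_finite by blast
qed

lemma lin_exp: assumes "(s::real) > 1" shows "\<exists>C>0. \<forall>n. real n + 1 \<le> C * s ^ n"
proof -
  define d where "d = s - 1"
  have d: "d > 0" using assms by (simp add: d_def)
  have "real n + 1 \<le> (1 + 1/d) * s ^ n" for n
  proof -
    have b: "1 + real n * d \<le> s ^ n" using Bernoulli_inequality[of d n] d by (simp add: d_def)
    have e: "(1 + 1/d) * (1 + real n * d) = real n + 1 + (real n * d + 1/d)" using d
      by (simp add: field_simps)
    have "real n * d + 1/d \<ge> 0" using d by simp
    hence "real n + 1 \<le> (1 + 1/d) * (1 + real n * d)" unfolding e by linarith
    also have "\<dots> \<le> (1 + 1/d) * s ^ n" using b d by (intro mult_left_mono) auto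
    finally show ?thesis .
  qed
  moreover have "1 + 1/d > 0" using d by (simp add: add_pos_pos)
  ultimately show ?thesis by blast
qed



lemma pref_compl: "\<exists>N. \<forall>w\<in>lang r. \<forall>u v. w = u @ v \<longrightarrow> (\<exists>x. length x \<le> N \<and> u @ x \<in> lang r)"
proof (induction r)
  case Zero then show ?case by simp
next
  case One then show ?case by auto
next
  case (Atom a)
  have "\<forall>w\<in>lang (Atom a). \<forall>u v. w = u @ v \<longrightarrow> (\<exists>x. length x \<le> 1 \<and> u @ x \<in> lang (Atom a))"
  proof (intro ballI allI impI)
    fix w u v assume "w \<in> lang (Atom a)" "w = u @ v"
    hence "u = [] \<and> v = [a] \<or> u = [a] \<and> v = []" by (cases u) auto
    thus "\<exists>x. length x \<le> 1 \<and> u @ x \<in> lang (Atom a)"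
    proof
      assume "u = [] \<and> v = [a]" thus ?thesis by (intro exI[of _ "[a]"]) auto
    next
      assume "u = [a] \<and> v = []" thus ?thesis by (intro exI[of _ "[]"]) auto
    qed
  qed
  then show ?case by blast
next
  case (Plus r s)
  then obtain N1 N2 where N1: "\<forall>w\<in>lang r. \<forall>u v. w = u @ v \<longrightarrow> (\<exists>x. length x \<le> N1 \<and> u @ x \<in> lang r)"
    and N2: "\<forall>w\<in>lang s. \<forall>u v. w = u @ v \<longrightarrow> (\<exists>x. length x \<le> N2 \<and> u @ x \<in> lang s)" by blast
  have "\<forall>w\<in>lang (Plus r s). \<forall>u v. w = u @ v \<longrightarrow> (\<exists>x. length x \<le> N1 + N2 \<and> u @ x \<in> lang (Plus r s))"
  proof (intro ballI allI impI)
    fix w u v assume "w \<in> lang (Plus r s)" "w = u @ v"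
    then consider "w \<in> lang r" | "w \<in> lang s" by auto
    then show "\<exists>x. length x \<le> N1 + N2 \<and> u @ x \<in> lang (Plus r s)"
    proof cases
      case 1
      then obtain x where "length x \<le> N1" "u @ x \<in> lang r" using N1 \<open>w = u @ v\<close> by blast
      thus ?thesis by (intro exI[of _ x]) auto
    next
      case 2
      then obtain x where "length x \<le> N2" "u @ x \<in> lang s" using N2 \<open>w = u @ v\<close> by blast
      thus ?thesis by (intro exI[of _ x]) auto
    qed
  qed
  then show ?case by blast
next
  case (Times r s)
  then obtain N1 N2 where N1: "\<forall>w\<in>lang r. \<forall>u v. w = u @ v \<longrightarrow> (\<exists>x. length x \<le> N1 \<and> u @ x \<in> lang r)"
    and N2: "\<forall>w\<in>lang s. \<forall>u v. w = u @ v \<longrightarrow> (\<exists>x. length x \<le> N2 \<and> u @ x \<in> lang s)" by blast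
  show ?case
  proof (cases "lang s = {}")
    case True
    then show ?thesis by (simp add: conc_def)
  next
    case False
    then obtain b0 where b0: "b0 \<in> lang s" by auto
    have "\<forall>w\<in>lang (Times r s). \<forall>u v. w = u @ v \<longrightarrow>
       (\<exists>x. length x \<le> N1 + length b0 + N2 \<and> u @ x \<in> lang (Times r s))"
    proof (intro ballI allI impI)
      fix w u v assume w: "w \<in> lang (Times r s)" "w = u @ v"
      then obtain a b where ab: "a \<in> lang r" "b \<in> lang s" "w = a @ b" by (auto simp: conc_def)
      from ab w have "a @ b = u @ v" by simp
      then obtain us where "a = u @ us \<and> us @ b = v \<or> a @ us = u \<and> b = us @ v"
        by (auto simp: append_eq_append_conv2)
      then show "\<exists>x. length x \<le> N1 + length b0 + N2 \<and> u @ x \<in> lang (Times r s)"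
      proof
        assume "a = u @ us \<and> us @ b = v"
        then obtain x where x: "length x \<le> N1" "u @ x \<in> lang r" using N1 ab by blast
        have "(u @ x) @ b0 \<in> lang (Times r s)" using x b0 unfolding conc_def lang.simps by blast
        hence "u @ (x @ b0) \<in> lang (Times r s)" by simp
        moreover have "length (x @ b0) \<le> N1 + length b0 + N2" using x by simp
        ultimately show ?thesis by blast
      next
        assume h: "a @ us = u \<and> b = us @ v"
        then obtain x where x: "length x \<le> N2" "us @ x \<in> lang s" using N2 ab by blast
        have "u @ x = a @ (us @ x)" using h by simp
        hence "u @ x \<in> lang (Times r s)" using x ab by (auto simp: conc_def)
        moreover have "length x \<le> N1 + length b0 + N2" using x by simp
        ultimately show ?thesis by blast
      qed
    qed
    then show ?thesis by blast
  qed
next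
  case (Star r)
  then obtain N where N: "\<forall>w\<in>lang r. \<forall>u v. w = u @ v \<longrightarrow> (\<exists>x. length x \<le> N \<and> u @ x \<in> lang r)"
    by blast
  have "w \<in> kstar (lang r) \<Longrightarrow> \<forall>u v. w = u @ v \<longrightarrow> (\<exists>x. length x \<le> N \<and> u @ x \<in> kstar (lang r))" for w
  proof (induction rule: kstar.induct)
    case kstar_Nil
    have "[] @ [] \<in> kstar (lang r) \<and> length ([]::'a list) \<le> N" using kstar.kstar_Nil by simp
    then show ?case by (metis Nil_is_append_conv)
  next
    case (kstar_app a w')
    show ?case
    proof (intro allI impI)
      fix u v assume "a @ w' = u @ v"
      then obtain us where "a = u @ us \<and> us @ w' = v \<or> a @ us = u \<and> w' = us @ v"
        by (auto simp: append_eq_append_conv2)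
      then show "\<exists>x. length x \<le> N \<and> u @ x \<in> kstar (lang r)"
      proof
        assume "a = u @ us \<and> us @ w' = v"
        then obtain x where x: "length x \<le> N" "u @ x \<in> lang r" using N kstar_app by blast
        have "(u @ x) @ [] \<in> kstar (lang r)" using x by (intro kstar.kstar_app kstar.kstar_Nil)
        thus ?thesis using x by auto
      next
        assume h: "a @ us = u \<and> w' = us @ v"
        then obtain x where x: "length x \<le> N" "us @ x \<in> kstar (lang r)" using kstar_app by blast
        have "a @ (us @ x) \<in> kstar (lang r)" by (rule kstar.kstar_app[OF kstar_app.hyps(1) x(2)])
        thus ?thesis using x h by auto
      qed
    qed
  qed
  then show ?case unfolding lang.simps by blast
qed

lemma suf_compl: "\<exists>N. \<forall>w\<in>lang r. \<forall>u v. w = u @ v \<longrightarrow> (\<exists>x. length x \<le> N \<and> x @ v \<in> lang r)"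
proof (induction r)
  case Zero then show ?case by simp
next
  case One then show ?case by auto
next
  case (Atom a)
  have "\<forall>w\<in>lang (Atom a). \<forall>u v. w = u @ v \<longrightarrow> (\<exists>x. length x \<le> 1 \<and> x @ v \<in> lang (Atom a))"
  proof (intro ballI allI impI)
    fix w u v assume "w \<in> lang (Atom a)" "w = u @ v"
    hence "u = [] \<and> v = [a] \<or> u = [a] \<and> v = []" by (cases u) auto
    thus "\<exists>x. length x \<le> 1 \<and> x @ v \<in> lang (Atom a)"
    proof
      assume "u = [] \<and> v = [a]" thus ?thesis by (intro exI[of _ "[]"]) auto
    next
      assume "u = [a] \<and> v = []" thus ?thesis by (intro exI[of _ "[a]"]) auto
    qed
  qed
  then show ?case by blast
next
  case (Plus r s)
  then obtain N1 N2 where N1: "\<forall>w\<in>lang r. \<forall>u v. w = u @ v \<longrightarrow> (\<exists>x. length x \<le> N1 \<and> x @ v \<in> lang r)"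
    and N2: "\<forall>w\<in>lang s. \<forall>u v. w = u @ v \<longrightarrow> (\<exists>x. length x \<le> N2 \<and> x @ v \<in> lang s)" by blast
  have "\<forall>w\<in>lang (Plus r s). \<forall>u v. w = u @ v \<longrightarrow> (\<exists>x. length x \<le> N1 + N2 \<and> x @ v \<in> lang (Plus r s))"
  proof (intro ballI allI impI)
    fix w u v assume "w \<in> lang (Plus r s)" "w = u @ v"
    then consider "w \<in> lang r" | "w \<in> lang s" by auto
    then show "\<exists>x. length x \<le> N1 + N2 \<and> x @ v \<in> lang (Plus r s)"
    proof cases
      case 1
      then obtain x where "length x \<le> N1" "x @ v \<in> lang r" using N1 \<open>w = u @ v\<close> by blast
      thus ?thesis by (intro exI[of _ x]) auto
    next
      case 2
      then obtain x where "length x \<le> N2" "x @ v \<in> lang s" using N2 \<open>w = u @ v\<close> by blast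
      thus ?thesis by (intro exI[of _ x]) auto
    qed
  qed
  then show ?case by blast
next
  case (Times r s)
  then obtain N1 N2 where N1: "\<forall>w\<in>lang r. \<forall>u v. w = u @ v \<longrightarrow> (\<exists>x. length x \<le> N1 \<and> x @ v \<in> lang r)"
    and N2: "\<forall>w\<in>lang s. \<forall>u v. w = u @ v \<longrightarrow> (\<exists>x. length x \<le> N2 \<and> x @ v \<in> lang s)" by blast
  show ?case
  proof (cases "lang r = {}")
    case True
    then show ?thesis by (simp add: conc_def)
  next
    case False
    then obtain a0 where a0: "a0 \<in> lang r" by auto
    have "\<forall>w\<in>lang (Times r s). \<forall>u v. w = u @ v \<longrightarrow>
       (\<exists>x. length x \<le> N1 + length a0 + N2 \<and> x @ v \<in> lang (Times r s))"
    proof (intro ballI allI impI)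
      fix w u v assume w: "w \<in> lang (Times r s)" "w = u @ v"
      then obtain a b where ab: "a \<in> lang r" "b \<in> lang s" "w = a @ b" by (auto simp: conc_def)
      from ab w have "a @ b = u @ v" by simp
      then obtain us where "a = u @ us \<and> us @ b = v \<or> a @ us = u \<and> b = us @ v"
        by (auto simp: append_eq_append_conv2)
      then show "\<exists>x. length x \<le> N1 + length a0 + N2 \<and> x @ v \<in> lang (Times r s)"
      proof
        assume h: "a = u @ us \<and> us @ b = v"
        then obtain x where x: "length x \<le> N1" "x @ us \<in> lang r" using N1 ab by blast
        have "x @ v = (x @ us) @ b" using h by simp
        moreover have "(x @ us) @ b \<in> lang (Times r s)" using x ab unfolding conc_def lang.simps by blast
        ultimately have "x @ v \<in> lang (Times r s)" by simp
        moreover have "length x \<le> N1 + length a0 + N2" using x by simp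
        ultimately show ?thesis by blast
      next
        assume h: "a @ us = u \<and> b = us @ v"
        then obtain x where x: "length x \<le> N2" "x @ v \<in> lang s" using N2 ab by blast
        have "(a0 @ x) @ v \<in> lang (Times r s)" using x a0 by (auto simp: conc_def)
        moreover have "length (a0 @ x) \<le> N1 + length a0 + N2" using x by simp
        ultimately show ?thesis by blast
      qed
    qed
    then show ?thesis by blast
  qed
next
  case (Star r)
  then obtain N where N: "\<forall>w\<in>lang r. \<forall>u v. w = u @ v \<longrightarrow> (\<exists>x. length x \<le> N \<and> x @ v \<in> lang r)"
    by blast
  have "w \<in> kstar (lang r) \<Longrightarrow> \<forall>u v. w = u @ v \<longrightarrow> (\<exists>x. length x \<le> N \<and> x @ v \<in> kstar (lang r))" for w
  proof (induction rule: kstar.induct)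
    case kstar_Nil
    have "[] @ [] \<in> kstar (lang r) \<and> length ([]::'a list) \<le> N" using kstar.kstar_Nil by simp
    then show ?case by (metis Nil_is_append_conv)
  next
    case (kstar_app a w')
    show ?case
    proof (intro allI impI)
      fix u v assume "a @ w' = u @ v"
      then obtain us where "a = u @ us \<and> us @ w' = v \<or> a @ us = u \<and> w' = us @ v"
        by (auto simp: append_eq_append_conv2)
      then show "\<exists>x. length x \<le> N \<and> x @ v \<in> kstar (lang r)"
      proof
        assume h: "a = u @ us \<and> us @ w' = v"
        then obtain x where x: "length x \<le> N" "x @ us \<in> lang r" using N kstar_app by blast
        have "(x @ us) @ w' \<in> kstar (lang r)" using x kstar_app by (intro kstar.kstar_app)
        thus ?thesis using x h by auto
      next
        assume h: "a @ us = u \<and> w' = us @ v"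
        then obtain x where x: "length x \<le> N" "x @ v \<in> kstar (lang r)" using kstar_app by blast
        thus ?thesis by blast
      qed
    qed
  qed
  then show ?case unfolding lang.simps by blast
qed



lemma wbar_len[simp]: "length (wbar bar x) = length x" by (simp add: wbar_def)

lemma wbar_inv: "(\<And>a. bar (bar a) = a) \<Longrightarrow> wbar bar (wbar bar x) = x"
  by (simp add: wbar_def rev_map comp_def)

lemma hairpin_I1: "\<gamma> @ \<alpha> @ \<beta> @ wbar bar \<alpha> \<in> L1 \<Longrightarrow> \<kappa> \<le> length \<alpha> \<Longrightarrow>
  \<gamma> @ \<alpha> @ \<beta> @ wbar bar \<alpha> @ wbar bar \<gamma> \<in> hairpin bar \<kappa> L1 L2"
  unfolding hairpin_def by blast

lemma hairpin_I2: "\<alpha> @ \<beta> @ wbar bar \<alpha> @ wbar bar \<gamma> \<in> L2 \<Longrightarrow> \<kappa> \<le> length \<alpha> \<Longrightarrow>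
  \<gamma> @ \<alpha> @ \<beta> @ wbar bar \<alpha> @ wbar bar \<gamma> \<in> hairpin bar \<kappa> L1 L2"
  unfolding hairpin_def by blast

lemma H_L1:
  assumes sub1: "L1 \<subseteq> {x @ \<alpha> @ y @ wbar bar \<alpha> | x \<alpha> y. length \<alpha> = \<kappa>}" and w: "w \<in> L1"
  shows "\<exists>h\<in>hairpin bar \<kappa> L1 L2. length w \<le> length h \<and> length h \<le> 2 * length w \<and> (\<exists>v. h = w @ v)"
proof -
  from w sub1 obtain x \<alpha> y where e: "w = x @ \<alpha> @ y @ wbar bar \<alpha>" "length \<alpha> = \<kappa>" by blast
  define h where "h = x @ \<alpha> @ y @ wbar bar \<alpha> @ wbar bar x"
  have "h \<in> hairpin bar \<kappa> L1 L2" unfolding h_def using e w by (intro hairpin_I1) auto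
  moreover have "h = w @ wbar bar x" using e by (simp add: h_def)
  moreover have "length h \<le> 2 * length w" using e by (simp add: h_def)
  moreover have "length w \<le> length h" using calculation(2) by simp
  ultimately show ?thesis by blast
qed

lemma H_L2:
  assumes inv: "\<And>a. bar (bar a) = a"
  and sub2: "L2 \<subseteq> {\<alpha> @ y @ wbar bar \<alpha> @ x | x \<alpha> y. length \<alpha> = \<kappa>}" and w: "w \<in> L2"
  shows "\<exists>h\<in>hairpin bar \<kappa> L1 L2. length w \<le> length h \<and> length h \<le> 2 * length w \<and> (\<exists>v. h = v @ w)"
proof -
  from w sub2 obtain x \<alpha> y where e: "w = \<alpha> @ y @ wbar bar \<alpha> @ x" "length \<alpha> = \<kappa>" by blast
  define h where "h = wbar bar x @ \<alpha> @ y @ wbar bar \<alpha> @ wbar bar (wbar bar x)"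
  have ww: "wbar bar (wbar bar x) = x" using inv by (rule wbar_inv)
  have "h \<in> hairpin bar \<kappa> L1 L2" unfolding h_def using e w ww by (intro hairpin_I2) auto
  moreover have "h = wbar bar x @ w" using e ww by (simp add: h_def)
  moreover have "length h \<le> 2 * length w" using e ww by (simp add: h_def)
  moreover have "length w \<le> length h" using calculation(2) by simp
  ultimately show ?thesis by blast
qed

lemma H_back:
  assumes inv: "\<And>a. bar (bar a) = a" and h: "h \<in> hairpin bar \<kappa> L1 L2"
  shows "(\<exists>w\<in>L1. length w \<le> length h \<and> length h \<le> 2 * length w \<and>
            h = w @ wbar bar (take (length h - length w) w)) \<or>
         (\<exists>w\<in>L2. length w \<le> length h \<and> length h \<le> 2 * length w \<and>
            h = wbar bar (drop (length w - (length h - length w)) w) @ w)"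
proof -
  from h obtain \<gamma> \<alpha> \<beta> where e: "h = \<gamma> @ \<alpha> @ \<beta> @ wbar bar \<alpha> @ wbar bar \<gamma>"
    and m: "\<gamma> @ \<alpha> @ \<beta> @ wbar bar \<alpha> \<in> L1 \<or> \<alpha> @ \<beta> @ wbar bar \<alpha> @ wbar bar \<gamma> \<in> L2"
    unfolding hairpin_def by blast
  from m show ?thesis
  proof
    assume L: "\<gamma> @ \<alpha> @ \<beta> @ wbar bar \<alpha> \<in> L1"
    define w where "w = \<gamma> @ \<alpha> @ \<beta> @ wbar bar \<alpha>"
    have l: "length h - length w = length \<gamma>" using e by (simp add: w_def)
    have "take (length \<gamma>) w = \<gamma>" by (simp add: w_def)
    hence "h = w @ wbar bar (take (length h - length w) w)" using e l by (simp add: w_def)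
    moreover have "length w \<le> length h" "length h \<le> 2 * length w" using e by (simp_all add: w_def)
    ultimately show ?thesis using L w_def by blast
  next
    assume L: "\<alpha> @ \<beta> @ wbar bar \<alpha> @ wbar bar \<gamma> \<in> L2"
    define w where "w = \<alpha> @ \<beta> @ wbar bar \<alpha> @ wbar bar \<gamma>"
    have l: "length w - (length h - length w) = length (\<alpha> @ \<beta> @ wbar bar \<alpha>)" using e by (simp add: w_def)
    have "drop (length (\<alpha> @ \<beta> @ wbar bar \<alpha>)) w = wbar bar \<gamma>" by (simp add: w_def)
    hence "wbar bar (drop (length w - (length h - length w)) w) = \<gamma>" using l wbar_inv[OF inv] by simp
    hence "h = wbar bar (drop (length w - (length h - length w)) w) @ w" using e by (simp add: w_def)
    moreover have "length w \<le> length h" "length h \<le> 2 * length w" using e by (simp_all add: w_def)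
    ultimately show ?thesis using L w_def by blast
  qed
qed

lemma transfer:
  fixes A B :: "'a::finite list set"
  assumes ex: "\<forall>w\<in>A. \<exists>h\<in>B. length w \<le> length h \<and> length h \<le> f (length w) \<and> P w h"
  and inj: "\<forall>w w' h. P w h \<longrightarrow> P w' h \<longrightarrow> length w = length w' \<longrightarrow> w = w'"
  shows "card {w\<in>A. length w = n} \<le> (\<Sum>m\<in>{n..f n}. card {h\<in>B. length h = m})"
proof -
  have ex': "\<forall>w\<in>A. \<exists>h. h \<in> B \<and> length w \<le> length h \<and> length h \<le> f (length w) \<and> P w h"
    using ex by blast
  from bchoice[OF ex'] obtain g where g: "\<forall>w\<in>A. g w \<in> B \<and> length w \<le> length (g w) \<and> length (g w) \<le> f (length w) \<and> P w (g w)"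
    by blast
  let ?S = "{w\<in>A. length w = n}"
  have "inj_on g ?S"
  proof (rule inj_onI)
    fix w w' assume a: "w \<in> ?S" "w' \<in> ?S" "g w = g w'"
    hence "P w (g w)" "P w' (g w)" "length w = length w'" using g by auto
    thus "w = w'" using inj by blast
  qed
  hence "card ?S = card (g ` ?S)" by (simp add: card_image)
  also have "\<dots> \<le> card (\<Union>m\<in>{n..f n}. {h\<in>B. length h = m})"
    by (rule card_mono) (use fin_cnt g in auto)
  also have "\<dots> \<le> (\<Sum>m\<in>{n..f n}. card {h\<in>B. length h = m})" by (rule card_UN_le) simp
  finally show ?thesis .
qed

lemma card_le_sum:
  fixes L :: "'a::finite list set"
  shows "card {w\<in>L. length w \<le> m} \<le> (\<Sum>n\<in>{..m}. card {w\<in>L. length w = n})"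
proof -
  have "{w\<in>L. length w \<le> m} = (\<Union>n\<in>{..m}. {w\<in>L. length w = n})" by auto
  thus ?thesis using card_UN_le[of "{..m}" "\<lambda>n. {w\<in>L. length w = n}"] by simp
qed

lemma back_count:
  fixes L1 L2 :: "'a::finite list set"
  assumes inv: "\<And>a. bar (bar a) = a"
  shows "card {h\<in>hairpin bar \<kappa> L1 L2. length h = m} \<le>
     (\<Sum>n\<in>{..m}. card {w\<in>L1. length w = n}) + (\<Sum>n\<in>{..m}. card {w\<in>L2. length w = n})"
proof -
  define F1 where "F1 w = w @ wbar bar (take (m - length w) w)" for w
  define F2 where "F2 w = wbar bar (drop (length w - (m - length w)) w) @ w" for w
  have sub: "{h\<in>hairpin bar \<kappa> L1 L2. length h = m} \<subseteq>
      F1 ` {w\<in>L1. length w \<le> m} \<union> F2 ` {w\<in>L2. length w \<le> m}"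
  proof
    fix h assume "h \<in> {h\<in>hairpin bar \<kappa> L1 L2. length h = m}"
    hence h: "h \<in> hairpin bar \<kappa> L1 L2" "length h = m" by auto
    from H_back[OF inv h(1)] consider
        w where "w\<in>L1" "length w \<le> length h" "h = w @ wbar bar (take (length h - length w) w)"
      | w where "w\<in>L2" "length w \<le> length h" "h = wbar bar (drop (length w - (length h - length w)) w) @ w"
      by blast
    then show "h \<in> F1 ` {w\<in>L1. length w \<le> m} \<union> F2 ` {w\<in>L2. length w \<le> m}"
    proof cases
      case (1 w)
      hence "h = F1 w" using h(2) by (simp add: F1_def)
      thus ?thesis using 1 h(2) by blast
    next
      case (2 w)
      hence "h = F2 w" using h(2) by (simp add: F2_def)
      thus ?thesis using 2 h(2) by blast
    qed
  qed
  have f1: "finite {w\<in>L1. length w \<le> m}" by (rule finite_subset[OF _ fin_len_le[of m]]) auto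
  have f2: "finite {w\<in>L2. length w \<le> m}" by (rule finite_subset[OF _ fin_len_le[of m]]) auto
  have "card {h\<in>hairpin bar \<kappa> L1 L2. length h = m} \<le> card (F1 ` {w\<in>L1. length w \<le> m} \<union> F2 ` {w\<in>L2. length w \<le> m})"
    by (rule card_mono[OF _ sub]) (use f1 f2 in simp)
  also have "\<dots> \<le> card (F1 ` {w\<in>L1. length w \<le> m}) + card (F2 ` {w\<in>L2. length w \<le> m})"
    by (rule card_Un_le)
  also have "\<dots> \<le> card {w\<in>L1. length w \<le> m} + card {w\<in>L2. length w \<le> m}"
    by (intro add_mono card_image_le f1 f2)
  also have "\<dots> \<le> (\<Sum>n\<in>{..m}. card {w\<in>L1. length w = n}) + (\<Sum>n\<in>{..m}. card {w\<in>L2. length w = n})"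
    by (intro add_mono card_le_sum)
  finally show ?thesis .
qed



lemma fin_transfer:
  fixes A B :: "'a::finite list set"
  assumes "finite B" "\<forall>w\<in>A. \<exists>h\<in>B. length w \<le> length h"
  shows "finite A"
proof -
  obtain M where M: "\<forall>k\<in>length ` B. k \<le> M"
    using finite_nat_set_iff_bounded_le[of "length ` B"] assms(1) by auto
  have "A \<subseteq> {w. length w \<le> M}" using assms(2) M by fastforce
  thus ?thesis using fin_len_le finite_subset by blast
qed

lemma inj_pref: "\<forall>w w' h. (\<exists>v. h = w @ v) \<longrightarrow> (\<exists>v. h = w' @ v) \<longrightarrow> length w = length w' \<longrightarrow> w = w'"
  by (auto simp: append_eq_append_conv)

lemma inj_suf: "\<forall>w w' h. (\<exists>v. h = v @ w) \<longrightarrow> (\<exists>v. h = v @ w') \<longrightarrow> length w = length w' \<longrightarrow> w = w'"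
  by (auto simp: append_eq_append_conv)

lemma growth_sq:
  fixes A B :: "'a::finite list set"
  assumes ex: "\<forall>w\<in>A. \<exists>h\<in>B. length w \<le> length h \<and> length h \<le> 2 * length w \<and> P w h"
  and inj: "\<forall>w w' h. P w h \<longrightarrow> P w' h \<longrightarrow> length w = length w' \<longrightarrow> w = w'"
  shows "growth A \<le> (growth B)^2"
proof (cases "growth B < 1")
  case True
  hence "finite B" by (rule growth_lt1_finite)
  moreover have "\<forall>w\<in>A. \<exists>h\<in>B. length w \<le> length h" using ex by blast
  ultimately have "finite A" by (rule fin_transfer)
  hence "growth A = 0" by (rule finite_growth0)
  thus ?thesis by simp
next
  case False
  define e where "e = growth B"
  have e1: "e \<ge> 1" using False by (simp add: e_def)
  show ?thesis unfolding e_def[symmetric]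
  proof (rule growth_le_of)
    fix y assume y: "e^2 < y"
    define z where "z = (e^2 + y)/2"
    have z: "e^2 < z" "z < y" using y by (auto simp: z_def)
    have e2: "1 \<le> e^2" using e1 by simp
    have z0: "z > 0" using z e2 by linarith
    define l where "l = sqrt z"
    have l0: "l \<ge> 0" and l2: "l^2 = z" using z0 by (auto simp: l_def)
    have el: "e < l" using power_less_imp_less_base[of e 2 l] z l2 l0 by simp
    have l1: "l \<ge> 1" using e1 el by simp
    from growth_lt[OF el[unfolded e_def]] obtain c where
      c: "c>0" "\<forall>m. real (card {h\<in>B. length h = m}) \<le> c * l^m" unfolding GG_def by auto
    have s: "y / z > 1" using z z0 by simp
    from lin_exp[OF s] obtain C where C: "C>0" "\<forall>n. real n + 1 \<le> C * (y/z)^n" by auto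
    have "real (card {w\<in>A. length w = n}) \<le> (c*C) * y^n" for n
    proof -
      have "card {w\<in>A. length w = n} \<le> (\<Sum>m\<in>{n..2*n}. card {h\<in>B. length h = m})"
        using transfer[of A B "\<lambda>k. 2*k" P n] ex inj by simp
      hence "real (card {w\<in>A. length w = n}) \<le> real (\<Sum>m\<in>{n..2*n}. card {h\<in>B. length h = m})"
        by (simp only: of_nat_le_iff)
      also have "\<dots> = (\<Sum>m\<in>{n..2*n}. real (card {h\<in>B. length h = m}))" by simp
      also have "\<dots> \<le> (\<Sum>m\<in>{n..2*n}. c * l^(2*n))"
      proof (rule sum_mono)
        fix m assume "m \<in> {n..2*n}"
        hence "l^m \<le> l^(2*n)" using l1 by (intro power_increasing) auto
        thus "real (card {h\<in>B. length h = m}) \<le> c * l^(2*n)"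
          using c by (meson mult_left_mono less_imp_le order.trans)
      qed
      also have "\<dots> = (real n + 1) * (c * z^n)"
        by (simp add: power_mult l2 Suc_diff_le)
      also have "\<dots> \<le> (C * (y/z)^n) * (c * z^n)"
        by (rule mult_right_mono) (use C c z0 in auto)
      also have "\<dots> = (c*C) * y^n" using z0 by (simp add: power_divide field_simps)
      finally show ?thesis .
    qed
    moreover have "y \<ge> 0" using z z0 by simp
    moreover have "c*C > 0" using c C by simp
    ultimately show "y \<in> GG A" unfolding GG_def by blast
  qed
qed

lemma growth_lin:
  fixes A B :: "'a::finite list set"
  assumes ex: "\<forall>w\<in>A. \<exists>h\<in>B. length w \<le> length h \<and> length h \<le> length w + N \<and> P w h"
  and inj: "\<forall>w w' h. P w h \<longrightarrow> P w' h \<longrightarrow> length w = length w' \<longrightarrow> w = w'"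
  shows "growth A \<le> growth B"
proof (cases "growth B < 1")
  case True
  hence "finite B" by (rule growth_lt1_finite)
  moreover have "\<forall>w\<in>A. \<exists>h\<in>B. length w \<le> length h" using ex by blast
  ultimately have "finite A" by (rule fin_transfer)
  hence "growth A = 0" by (rule finite_growth0)
  thus ?thesis using growth_nonneg[of B] by simp
next
  case False
  show ?thesis
  proof (rule growth_le_of)
    fix y assume y: "growth B < y"
    have y1: "y \<ge> 1" using y False by simp
    from growth_lt[OF y] obtain c where
      c: "c>0" "\<forall>m. real (card {h\<in>B. length h = m}) \<le> c * y^m" unfolding GG_def by auto
    have "real (card {w\<in>A. length w = n}) \<le> (real N + 1) * c * y^N * y^n" for n
    proof -
      have "card {w\<in>A. length w = n} \<le> (\<Sum>m\<in>{n..n+N}. card {h\<in>B. length h = m})"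
        using transfer[of A B "\<lambda>k. k + N" P n] ex inj by simp
      hence "real (card {w\<in>A. length w = n}) \<le> real (\<Sum>m\<in>{n..n+N}. card {h\<in>B. length h = m})"
        by (simp only: of_nat_le_iff)
      also have "\<dots> = (\<Sum>m\<in>{n..n+N}. real (card {h\<in>B. length h = m}))" by simp
      also have "\<dots> \<le> (\<Sum>m\<in>{n..n+N}. c * y^(n+N))"
      proof (rule sum_mono)
        fix m assume "m \<in> {n..n+N}"
        hence "y^m \<le> y^(n+N)" using y1 by (intro power_increasing) auto
        thus "real (card {h\<in>B. length h = m}) \<le> c * y^(n+N)"
          using c by (meson mult_left_mono less_imp_le order.trans)
      qed
      also have "\<dots> = (real N + 1) * c * y^N * y^n"
        by (simp add: power_add Suc_diff_le algebra_simps)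
      finally show ?thesis .
    qed
    moreover have "(real N + 1) * c * y^N > 0" using c y1 by simp
    ultimately show "y \<in> GG A" using y1 unfolding GG_def by auto
  qed
qed



lemma partA:
  fixes L1 L2 :: "'a::finite list set"
  assumes inv: "\<And>a. bar (bar a) = a"
  shows "growth (hairpin bar \<kappa> L1 L2) \<le> max (growth L1) (growth L2)"
proof (cases "max (growth L1) (growth L2) < 1")
  case True
  hence "finite L1" "finite L2" using growth_lt1_finite by auto
  then obtain M1 M2 where M1: "\<forall>k\<in>length ` L1. k \<le> M1" and M2: "\<forall>k\<in>length ` L2. k \<le> M2"
    using finite_nat_set_iff_bounded_le by (metis finite_imageI)
  have "hairpin bar \<kappa> L1 L2 \<subseteq> {h. length h \<le> 2 * (M1 + M2)}"
  proof
    fix h assume h: "h \<in> hairpin bar \<kappa> L1 L2"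
    from H_back[OF inv h] obtain w where "w \<in> L1 \<and> length h \<le> 2 * length w \<or> w \<in> L2 \<and> length h \<le> 2 * length w"
      by blast
    thus "h \<in> {h. length h \<le> 2 * (M1 + M2)}" using M1 M2 by fastforce
  qed
  hence "finite (hairpin bar \<kappa> L1 L2)" using fin_len_le finite_subset by blast
  hence "growth (hairpin bar \<kappa> L1 L2) = 0" by (rule finite_growth0)
  thus ?thesis using growth_nonneg[of L1] by simp
next
  case False
  define lam where "lam = max (growth L1) (growth L2)"
  have lam1: "lam \<ge> 1" using False unfolding lam_def by (simp only: not_less)
  show ?thesis unfolding lam_def[symmetric]
  proof (rule growth_le_of)
    fix y assume y: "lam < y"
    define l where "l = (lam + y)/2"
    have l: "lam < l" "l < y" using y by (auto simp: l_def)
    have l1: "l \<ge> 1" using l lam1 by simp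
    have "growth L1 < l" "growth L2 < l" using l by (auto simp: lam_def)
    from growth_lt[OF this(1)] growth_lt[OF this(2)] obtain c1 c2 where
      c1: "c1>0" "\<forall>m. real (card {w\<in>L1. length w = m}) \<le> c1 * l^m" and
      c2: "c2>0" "\<forall>m. real (card {w\<in>L2. length w = m}) \<le> c2 * l^m" unfolding GG_def by auto
    have s: "y / l > 1" using l l1 by simp
    from lin_exp[OF s] obtain C where C: "C>0" "\<forall>n. real n + 1 \<le> C * (y/l)^n" by auto
    have "real (card {h\<in>hairpin bar \<kappa> L1 L2. length h = m}) \<le> ((c1+c2)*C) * y^m" for m
    proof -
      have "real (card {h\<in>hairpin bar \<kappa> L1 L2. length h = m}) \<le>
         real ((\<Sum>n\<in>{..m}. card {w\<in>L1. length w = n}) + (\<Sum>n\<in>{..m}. card {w\<in>L2. length w = n}))"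
        using back_count[OF inv, of \<kappa> L1 L2 m] by (simp only: of_nat_le_iff)
      also have "\<dots> = (\<Sum>n\<in>{..m}. real (card {w\<in>L1. length w = n}) + real (card {w\<in>L2. length w = n}))"
        by (simp add: sum.distrib)
      also have "\<dots> \<le> (\<Sum>n\<in>{..m}. (c1 + c2) * l^m)"
      proof (rule sum_mono)
        fix n assume "n \<in> {..m}"
        hence p: "l^n \<le> l^m" using l1 by (intro power_increasing) auto
        have "real (card {w\<in>L1. length w = n}) + real (card {w\<in>L2. length w = n}) \<le> c1 * l^n + c2 * l^n"
          using c1 c2 by (intro add_mono) auto
        also have "\<dots> = (c1 + c2) * l^n" by (simp add: algebra_simps)
        also have "\<dots> \<le> (c1 + c2) * l^m" using p c1 c2 by (intro mult_left_mono) auto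
        finally show "real (card {w\<in>L1. length w = n}) + real (card {w\<in>L2. length w = n}) \<le> (c1 + c2) * l^m" .
      qed
      also have "\<dots> = (real m + 1) * ((c1 + c2) * l^m)" by simp
      also have "\<dots> \<le> (C * (y/l)^m) * ((c1 + c2) * l^m)"
        by (rule mult_right_mono) (use C c1 c2 l1 in auto)
      also have "\<dots> = ((c1+c2)*C) * y^m" using l1 by (simp add: power_divide field_simps)
      finally show ?thesis .
    qed
    moreover have "y \<ge> 0" using l l1 by simp
    moreover have "(c1+c2)*C > 0" using c1 c2 C by simp
    ultimately show "y \<in> GG (hairpin bar \<kappa> L1 L2)" unfolding GG_def by blast
  qed
qed

theorem theorem3:
  fixes bar :: "'a::finite \<Rightarrow> 'a" and \<kappa> :: nat and L1 L2 :: "'a list set"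
  assumes alph: "CARD('a) \<ge> 2"
    and inv: "\<And>a. bar (bar a) = a"
    and kpos: "\<kappa> > 0"
    and reg1: "regular L1" and reg2: "regular L2"
    and sub1: "L1 \<subseteq> {x @ \<alpha> @ y @ wbar bar \<alpha> | x \<alpha> y. length \<alpha> = \<kappa>}"
    and sub2: "L2 \<subseteq> {\<alpha> @ y @ wbar bar \<alpha> @ x | x \<alpha> y. length \<alpha> = \<kappa>}"
  defines "lam \<equiv> max (growth L1) (growth L2)"
    and "eta \<equiv> growth (hairpin bar \<kappa> L1 L2)"
  shows "(sqrt lam \<le> eta \<and> eta \<le> lam
          \<and> (exp_growth (hairpin bar \<kappa> L1 L2) \<longleftrightarrow> lam > 1)
          \<and> (poly_growth (hairpin bar \<kappa> L1 L2) \<longleftrightarrow> lam = 1)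
          \<and> (finite_growth (hairpin bar \<kappa> L1 L2) \<longleftrightarrow> lam = 0))
         \<and> (regular (hairpin bar \<kappa> L1 L2) \<longrightarrow> eta = lam)"
proof -
  let ?H = "hairpin bar \<kappa> L1 L2"
  have up: "eta \<le> lam" unfolding eta_def lam_def using partA[OF inv] .
  have e0: "eta \<ge> 0" unfolding eta_def by (rule growth_nonneg)
  have l0: "lam \<ge> 0" unfolding lam_def using growth_nonneg[of L1] by simp
  have ex1: "\<forall>w\<in>L1. \<exists>h\<in>?H. length w \<le> length h \<and> length h \<le> 2 * length w \<and> (\<exists>v. h = w @ v)"
    using H_L1[OF sub1] by blast
  have ex2: "\<forall>w\<in>L2. \<exists>h\<in>?H. length w \<le> length h \<and> length h \<le> 2 * length w \<and> (\<exists>v. h = v @ w)"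
    using H_L2[OF inv sub2] by blast
  have "growth L1 \<le> eta^2" unfolding eta_def by (rule growth_sq[OF ex1 inj_pref])
  moreover have "growth L2 \<le> eta^2" unfolding eta_def by (rule growth_sq[OF ex2 inj_suf])
  ultimately have "lam \<le> eta^2" unfolding lam_def by simp
  hence low: "sqrt lam \<le> eta" using e0 by (metis real_sqrt_abs real_sqrt_le_iff abs_of_nonneg)
  have regpart: "regular ?H \<longrightarrow> eta = lam"
  proof
    assume "regular ?H"
    then obtain r where r: "lang r = ?H" unfolding regular_def by blast
    obtain N1 where N1: "\<forall>w\<in>lang r. \<forall>u v. w = u @ v \<longrightarrow> (\<exists>x. length x \<le> N1 \<and> u @ x \<in> lang r)"
      using pref_compl by blast
    obtain N2 where N2: "\<forall>w\<in>lang r. \<forall>u v. w = u @ v \<longrightarrow> (\<exists>x. length x \<le> N2 \<and> x @ v \<in> lang r)"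
      using suf_compl by blast
    have c1: "\<forall>w\<in>L1. \<exists>h\<in>?H. length w \<le> length h \<and> length h \<le> length w + N1 \<and> (\<exists>v. h = w @ v)"
    proof
      fix w assume "w \<in> L1"
      then obtain h v where "h \<in> ?H" "h = w @ v" using ex1 by blast
      then obtain x where "length x \<le> N1" "w @ x \<in> ?H" using N1 r by blast
      thus "\<exists>h\<in>?H. length w \<le> length h \<and> length h \<le> length w + N1 \<and> (\<exists>v. h = w @ v)"
        by (intro bexI[of _ "w @ x"]) auto
    qed
    have c2: "\<forall>w\<in>L2. \<exists>h\<in>?H. length w \<le> length h \<and> length h \<le> length w + N2 \<and> (\<exists>v. h = v @ w)"
    proof
      fix w assume "w \<in> L2"
      then obtain h v where "h \<in> ?H" "h = v @ w" using ex2 by blast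
      then obtain x where "length x \<le> N2" "x @ w \<in> ?H" using N2 r by blast
      thus "\<exists>h\<in>?H. length w \<le> length h \<and> length h \<le> length w + N2 \<and> (\<exists>v. h = v @ w)"
        by (intro bexI[of _ "x @ w"]) auto
    qed
    have "growth L1 \<le> eta" unfolding eta_def by (rule growth_lin[OF c1 inj_pref])
    moreover have "growth L2 \<le> eta" unfolding eta_def by (rule growth_lin[OF c2 inj_suf])
    ultimately show "eta = lam" using up unfolding lam_def by simp
  qed
  have "exp_growth ?H \<longleftrightarrow> lam > 1"
  proof
    assume "exp_growth ?H" thus "lam > 1" using up unfolding exp_growth_def eta_def by simp
  next
    assume "lam > 1" hence "sqrt lam > 1" by simp
    thus "exp_growth ?H" using low unfolding exp_growth_def eta_def by linarith
  qed
  moreover have "poly_growth ?H \<longleftrightarrow> lam = 1"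
  proof
    assume "poly_growth ?H" hence e: "eta = 1" unfolding poly_growth_def eta_def by simp
    hence "sqrt lam \<le> 1" using low by simp
    hence "lam \<le> 1" by simp
    thus "lam = 1" using up e by simp
  next
    assume "lam = 1" thus "poly_growth ?H" using low up unfolding poly_growth_def eta_def by simp
  qed
  moreover have "finite_growth ?H \<longleftrightarrow> lam = 0"
  proof
    assume "finite_growth ?H" hence e: "eta = 0" unfolding finite_growth_def eta_def by simp
    hence "sqrt lam \<le> 0" using low by simp
    thus "lam = 0" using l0 by simp
  next
    assume "lam = 0" thus "finite_growth ?H" using e0 up unfolding finite_growth_def eta_def by simp
  qed
  ultimately show ?thesis using low up regpart by blast
qed

end
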